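(* Let $\Gamma$ be a highly-regular graph with $3\le\operatorname{diam}(\Gamma)<\infty$. Then the complement $\overline{\Gamma}$ is a highly-regular graph with $\operatorname{diam}(\overline{\Gamma})=2$ which is not distance-regular.
   Context: All graphs are finite, undirected, without loops or multiple edges; the diameter of a disconnected graph is $\infty$. $\overline{\Gamma}$ has vertex set $V(\Gamma)$ and edges exactly the pairs of distinct vertices not adjacent in $\Gamma$. A graph $\Gamma$ of order $n$ is highly-regular with collapsed adjacency matrix (CAM) $C=[c_{i,j}]_{1\le i,j\le m}$, where $2\le m<n$ (the value $m=n$ is allowed only when $n=2$), if for every vertex $u$ there is a partition of $V(\Gamma)$ into nonempty sets $V_1(u)=\{u\},V_2(u),\dots,V_m(u)$ such that for all $i,j$, every vertex $y\in V_j(u)$ is adjacent to exactly $c_{i,j}$ vertices of $V_i(u)$. A connected graph $\Gamma$ is distance-regular if for all $u,v$ the numbers $|D_1(v)\cap D_{i-1}(u)|$, $|D_1(v)\cap D_i(u)|$, $|D_1(v)\cap D_{i+1}(u)|$ depend only on $i=d(u,v)$, where $D_i(u)=\{v:d(u,v)=i\}$. *)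

theory Defs
  imports Main "HOL-Library.Extended_Nat"
begin

text \<open>A finite simple graph: finite vertex set V, adjacency relation E that is
symmetric and irreflexive (only its restriction to V matters).\<close>
definition graph :: "'a set \<Rightarrow> ('a \<Rightarrow> 'a \<Rightarrow> bool) \<Rightarrow> bool" where
  "graph V E \<longleftrightarrow> finite V \<and> (\<forall>x y. E x y \<longrightarrow> E y x) \<and> (\<forall>x. \<not> E x x)"

definition compl_graph :: "'a set \<Rightarrow> ('a \<Rightarrow> 'a \<Rightarrow> bool) \<Rightarrow> 'a \<Rightarrow> 'a \<Rightarrow> bool" where
  "compl_graph V E x y \<longleftrightarrow> x \<in> V \<and> y \<in> V \<and> x \<noteq> y \<and> \<not> E x y"

definition walk :: "'a set \<Rightarrow> ('a \<Rightarrow> 'a \<Rightarrow> bool) \<Rightarrow> 'a list \<Rightarrow> bool" where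
  "walk V E xs \<longleftrightarrow> xs \<noteq> [] \<and> set xs \<subseteq> V \<and> (\<forall>i. Suc i < length xs \<longrightarrow> E (xs ! i) (xs ! Suc i))"

definition gdist :: "'a set \<Rightarrow> ('a \<Rightarrow> 'a \<Rightarrow> bool) \<Rightarrow> 'a \<Rightarrow> 'a \<Rightarrow> enat" where
  "gdist V E u v = (INF xs \<in> {xs. walk V E xs \<and> hd xs = u \<and> last xs = v}. enat (length xs - 1))"

definition diam :: "'a set \<Rightarrow> ('a \<Rightarrow> 'a \<Rightarrow> bool) \<Rightarrow> enat" where
  "diam V E = (SUP u \<in> V. SUP v \<in> V. gdist V E u v)"

text \<open>Highly-regular: there are m and a collapsed adjacency matrix C such that for
every vertex u there is a partition of V into nonempty cells labelled 1..m
(given by a labelling P), with cell 1 equal to {u}, and every y in cell j has exactly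
C i j neighbours in cell i.\<close>
definition highly_regular :: "'a set \<Rightarrow> ('a \<Rightarrow> 'a \<Rightarrow> bool) \<Rightarrow> bool" where
  "highly_regular V E \<longleftrightarrow>
    (\<exists>(m::nat) (C::nat \<Rightarrow> nat \<Rightarrow> nat).
      ((2 \<le> m \<and> m < card V) \<or> (m = card V \<and> card V = 2)) \<and>
      (\<forall>u\<in>V. \<exists>P :: 'a \<Rightarrow> nat.
         (\<forall>x\<in>V. P x \<in> {1..m}) \<and>
         {x\<in>V. P x = 1} = {u} \<and>
         (\<forall>i\<in>{1..m}. \<exists>x\<in>V. P x = i) \<and>
         (\<forall>i\<in>{1..m}. \<forall>j\<in>{1..m}. \<forall>y\<in>V. P y = j \<longrightarrow>
             card {x\<in>V. P x = i \<and> E x y} = C i j)))"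

definition dsphere :: "'a set \<Rightarrow> ('a \<Rightarrow> 'a \<Rightarrow> bool) \<Rightarrow> 'a \<Rightarrow> nat \<Rightarrow> 'a set" where
  "dsphere V E u i = {v\<in>V. gdist V E u v = enat i}"

definition nbrs :: "'a set \<Rightarrow> ('a \<Rightarrow> 'a \<Rightarrow> bool) \<Rightarrow> 'a \<Rightarrow> 'a set" where
  "nbrs V E v = {x\<in>V. E v x}"

text \<open>Distance-regular: connected, and the numbers |D_1(v) \<inter> D_{i-1}(u)|,
|D_1(v) \<inter> D_i(u)|, |D_1(v) \<inter> D_{i+1}(u)| depend only on i = d(u,v)
(D_{-1} = \<emptyset>, so the first count is only compared for i \<ge> 1).\<close>
definition distance_regular :: "'a set \<Rightarrow> ('a \<Rightarrow> 'a \<Rightarrow> bool) \<Rightarrow> bool" where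
  "distance_regular V E \<longleftrightarrow>
    (\<forall>u\<in>V. \<forall>v\<in>V. gdist V E u v < \<infinity>) \<and>
    (\<forall>u\<in>V. \<forall>v\<in>V. \<forall>u'\<in>V. \<forall>v'\<in>V. \<forall>i::nat.
       gdist V E u v = enat i \<and> gdist V E u' v' = enat i \<longrightarrow>
       (i \<ge> 1 \<longrightarrow> card (nbrs V E v \<inter> dsphere V E u (i - 1)) = card (nbrs V E v' \<inter> dsphere V E u' (i - 1))) \<and>
       card (nbrs V E v \<inter> dsphere V E u i) = card (nbrs V E v' \<inter> dsphere V E u' i) \<and>
       card (nbrs V E v \<inter> dsphere V E u (i + 1)) = card (nbrs V E v' \<inter> dsphere V E u' (i + 1)))"

end

theory Submission
  imports Defs
begin

lemma walk_ConsI: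
  assumes "walk V E ys" "z \<in> V" "E z (hd ys)"
  shows "walk V E (z # ys)"
  using assms unfolding walk_def
  by (auto simp: nth_Cons hd_conv_nth split: nat.splits)

lemma walk_drop:
  assumes "walk V E w" "j < length w"
  shows "walk V E (drop j w)"
  using assms set_drop_subset[of j w] unfolding walk_def by auto

lemma walk2: "p \<in> V \<Longrightarrow> z \<in> V \<Longrightarrow> G p z \<Longrightarrow> walk V G [p, z]"
  unfolding walk_def by (auto simp: less_Suc_eq)

lemma walk3: "p \<in> V \<Longrightarrow> w \<in> V \<Longrightarrow> z \<in> V \<Longrightarrow> G p w \<Longrightarrow> G w z \<Longrightarrow> walk V G [p, w, z]"
  unfolding walk_def by (auto simp: less_Suc_eq)

lemma walk1: "p \<in> V \<Longrightarrow> walk V G [p]"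
  unfolding walk_def by auto

lemma gdist_le:
  "walk V E xs \<Longrightarrow> hd xs = u \<Longrightarrow> last xs = v \<Longrightarrow> gdist V E u v \<le> enat (length xs - 1)"
  unfolding gdist_def by (rule INF_lower) auto

lemma gdist_less:
  "gdist V E u v < a \<Longrightarrow> \<exists>xs. walk V E xs \<and> hd xs = u \<and> last xs = v \<and> enat (length xs - 1) < a"
  unfolding gdist_def by (simp add: INF_less_iff)

lemma gdist_lt2:
  assumes "gdist V E u v < 2"
  shows "u = v \<or> E u v"
proof -
  obtain xs where xs: "walk V E xs" "hd xs = u" "last xs = v" "enat (length xs - 1) < 2"
    using gdist_less[OF assms] by blast
  have ne: "xs \<noteq> []" using xs(1) by (simp add: walk_def)
  have "length xs - 1 < 2" using xs(4) by (simp add: numeral_eq_enat)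
  moreover have "length xs > 0" using ne by simp
  ultimately have "length xs = 1 \<or> length xs = 2" by arith
  then show ?thesis
  proof
    assume "length xs = 1" then show ?thesis using xs ne by (simp add: hd_conv_nth last_conv_nth)
  next
    assume l: "length xs = 2"
    hence "E (xs ! 0) (xs ! 1)" using xs(1) unfolding walk_def by auto
    then show ?thesis using xs ne l by (simp add: hd_conv_nth last_conv_nth)
  qed
qed

lemma gdist_one:
  assumes "\<forall>x. \<not> G x x" "p \<in> V" "z \<in> V"
  shows "gdist V G p z = enat 1 \<longleftrightarrow> G p z"
proof
  assume h: "gdist V G p z = enat 1"
  hence "gdist V G p z < 2" by (simp add: numeral_eq_enat)
  hence "p = z \<or> G p z" by (rule gdist_lt2)
  moreover have "p = z \<Longrightarrow> False"
  proof -
    assume "p = z"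
    hence "gdist V G p z \<le> enat 0" using gdist_le[OF walk1[OF assms(2)]] by simp
    with h show False by simp
  qed
  ultimately show "G p z" by blast
next
  assume g: "G p z"
  have le: "gdist V G p z \<le> enat 1" using gdist_le[OF walk2[of p V z G, OF assms(2,3) g]] by simp
  have "\<not> gdist V G p z < enat 1"
  proof
    assume "gdist V G p z < enat 1"
    then obtain xs where xs: "walk V G xs" "hd xs = p" "last xs = z" "enat (length xs - 1) < enat 1"
      using gdist_less[OF \<open>gdist V G p z < enat 1\<close>] by (elim exE conjE)
    have ne: "xs \<noteq> []" using xs(1) by (simp add: walk_def)
    have "length xs = 1" using xs(4) ne by (cases xs) auto
    hence "p = z" using xs ne by (simp add: hd_conv_nth last_conv_nth)
    with g assms(1) show False by auto
  qed
  with le show "gdist V G p z = enat 1" by auto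
qed

lemma dsphere_one:
  assumes "\<forall>x. \<not> G x x" "p \<in> V"
  shows "dsphere V G p 1 = {z\<in>V. G p z}"
  using gdist_one[of G p V, OF assms(1,2)] unfolding dsphere_def by auto

definition goodP :: "'a set \<Rightarrow> ('a \<Rightarrow> 'a \<Rightarrow> bool) \<Rightarrow> nat \<Rightarrow> (nat \<Rightarrow> nat \<Rightarrow> nat) \<Rightarrow> ('a \<Rightarrow> nat) \<Rightarrow> 'a \<Rightarrow> bool" where
  "goodP V E m C P u \<longleftrightarrow> (\<forall>x\<in>V. P x \<in> {1..m}) \<and>
         {x\<in>V. P x = 1} = {u} \<and>
         (\<forall>i\<in>{1..m}. \<exists>x\<in>V. P x = i) \<and>
         (\<forall>i\<in>{1..m}. \<forall>j\<in>{1..m}. \<forall>y\<in>V. P y = j \<longrightarrow>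
             card {x\<in>V. P x = i \<and> E x y} = C i j)"

lemma goodP_D:
  assumes "goodP V E m C P u"
  shows "\<And>x. x \<in> V \<Longrightarrow> P x \<in> {1..m}" "{x\<in>V. P x = 1} = {u}"
    "\<And>i. i \<in> {1..m} \<Longrightarrow> \<exists>x\<in>V. P x = i"
    "\<And>i j y. i \<in> {1..m} \<Longrightarrow> j \<in> {1..m} \<Longrightarrow> y \<in> V \<Longrightarrow> P y = j \<Longrightarrow>
             card {x\<in>V. P x = i \<and> E x y} = C i j"
  using assms unfolding goodP_def by blast+

lemma double_count:
  assumes g: "graph V E" and P: "goodP V E m C P u" and ij: "i \<in> {1..m}" "j \<in> {1..m}"
  shows "card {x\<in>V. P x = j} * C i j = card {x\<in>V. P x = i} * C j i"
proof -
  have fin: "finite V" and sym: "\<And>x y. E x y \<Longrightarrow> E y x" using g by (auto simp: graph_def)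
  let ?A = "{x\<in>V. P x = i}" and ?B = "{x\<in>V. P x = j}"
  have fA: "finite ?A" "finite ?B" using fin by auto
  have c1: "C i j = card {x\<in>?A. E x y}" if "y \<in> ?B" for y
  proof -
    have "{x\<in>?A. E x y} = {x\<in>V. P x = i \<and> E x y}" by auto
    then show ?thesis using P ij that unfolding goodP_def by auto
  qed
  have c2: "C j i = card {y\<in>?B. E x y}" if "x \<in> ?A" for x
  proof -
    have "{y\<in>?B. E x y} = {y\<in>V. P y = j \<and> E y x}" using sym by auto
    then show ?thesis using P ij that unfolding goodP_def by auto
  qed
  have "card ?B * C i j = (\<Sum>y\<in>?B. C i j)" by simp
  also have "\<dots> = (\<Sum>y\<in>?B. card {x\<in>?A. E x y})"
    by (rule sum.cong[OF refl]) (erule c1)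
  also have "\<dots> = (\<Sum>y\<in>?B. \<Sum>x\<in>?A. if E x y then 1 else 0)"
    using fA by (simp add: sum.inter_filter[symmetric])
  also have "\<dots> = (\<Sum>x\<in>?A. \<Sum>y\<in>?B. if E x y then 1 else 0)"
    by (rule sum.swap)
  also have "\<dots> = (\<Sum>x\<in>?A. card {y\<in>?B. E x y})"
    using fA by (simp add: sum.inter_filter[symmetric])
  also have "\<dots> = (\<Sum>x\<in>?A. C j i)"
    by (rule sum.cong[OF refl]) (erule c2[symmetric])
  also have "\<dots> = card ?A * C j i" by simp
  finally show ?thesis .
qed

lemma cell_size:
  assumes g: "graph V E" and P: "goodP V E m C P u" and P': "goodP V E m C P' u'"
    and conn: "\<And>v. v \<in> V \<Longrightarrow> \<exists>xs. walk V E xs \<and> hd xs = u \<and> last xs = v"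
    and i: "i \<in> {1..m}"
  shows "card {x\<in>V. P x = i} = card {x\<in>V. P' x = i}"
proof -
  have fin: "finite V" and sym: "\<And>x y. E x y \<Longrightarrow> E y x" using g by (auto simp: graph_def)
  define S where "S k = card {x\<in>V. P x = k}" for k
  define S' where "S' k = card {x\<in>V. P' x = k}" for k
  have PV: "P x \<in> {1..m}" if "x \<in> V" for x using P that unfolding goodP_def by auto
  have S1: "S 1 = 1" "S' 1 = 1" using P P' unfolding goodP_def S_def S'_def by auto
  have main: "S (P (w ! t)) = S' (P (w ! t))" if w: "walk V E w" "hd w = u" and t: "t < length w" for w t
    using t
  proof (induction t)
    case 0
    have "w ! 0 = u" using w by (metis hd_conv_nth walk_def)
    moreover have "P u = 1" using P unfolding goodP_def by auto
    ultimately show ?case using S1 by simp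
  next
    case (Suc t)
    let ?a = "w ! t" and ?b = "w ! Suc t"
    have ab: "E ?a ?b" using w(1) Suc.prems unfolding walk_def by auto
    have aV: "?a \<in> V" "?b \<in> V" using w(1) Suc.prems nth_mem[of t w] nth_mem[of "Suc t" w]
      unfolding walk_def by auto
    define i where "i = P ?a"
    define j where "j = P ?b"
    have ij: "i \<in> {1..m}" "j \<in> {1..m}" using PV aV i_def j_def by auto
    have IH: "S i = S' i" using Suc i_def by simp
    have "C j i = card {x\<in>V. P x = j \<and> E x ?a}" using P ij aV unfolding goodP_def i_def by auto
    moreover have "?b \<in> {x\<in>V. P x = j \<and> E x ?a}" using aV ab sym j_def by auto
    ultimately have Cji: "C j i > 0" using fin by (metis (no_types, lifting) card_gt_0_iff empty_iff finite_subset mem_Collect_eq subsetI)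
    have "S i > 0" unfolding S_def using aV fin i_def by (auto simp: card_gt_0_iff)
    have e1: "S j * C i j = S i * C j i" unfolding S_def by (rule double_count[OF g P ij])
    have e2: "S' j * C i j = S' i * C j i" unfolding S'_def by (rule double_count[OF g P' ij])
    have "C i j > 0" using e1 \<open>S i > 0\<close> Cji by (metis mult_eq_0_iff not_gr0)
    moreover have "S j * C i j = S' j * C i j" using e1 e2 IH by simp
    ultimately have "S j = S' j" by simp
    then show ?case using j_def by simp
  qed
  have "\<exists>v\<in>V. P v = i" using P i unfolding goodP_def by blast
  then obtain v where v: "v \<in> V" "P v = i" by blast
  obtain w where w: "walk V E w" "hd w = u" "last w = v" using conn[OF v(1)] by blast
  have ne: "w \<noteq> []" using w by (simp add: walk_def)
  have "S (P (w ! (length w - 1))) = S' (P (w ! (length w - 1)))" using main[OF w(1,2)] ne by simp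
  then show ?thesis using w ne v by (simp add: last_conv_nth S_def S'_def)
qed

lemma count_pair:
  assumes g: "graph V E" and pq: "p \<in> V" "q \<in> V" "p \<noteq> q" "\<not> E p q"
  shows "card V = 2 + card (nbrs V E p \<union> nbrs V E q)
     + card (nbrs V (compl_graph V E) q \<inter> dsphere V (compl_graph V E) p 1)"
proof -
  have fin: "finite V" and sym: "\<And>x y. E x y \<Longrightarrow> E y x" and irr: "\<And>x. \<not> E x x"
    using g by (auto simp: graph_def)
  have ir': "\<forall>x. \<not> compl_graph V E x x" by (simp add: compl_graph_def)
  let ?N = "nbrs V E p \<union> nbrs V E q"
  let ?L = "nbrs V (compl_graph V E) q \<inter> dsphere V (compl_graph V E) p 1"
  have L: "?L = {z\<in>V. compl_graph V E q z \<and> compl_graph V E p z}"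
    using dsphere_one[of "compl_graph V E" p V, OF ir' pq(1)] unfolding nbrs_def by auto
  have "V = insert p (insert q (?N \<union> ?L))"
    using pq unfolding L by (auto simp: nbrs_def compl_graph_def)
  moreover have "p \<notin> insert q (?N \<union> ?L)" "q \<notin> ?N \<union> ?L"
    using pq irr sym unfolding L by (auto simp: nbrs_def compl_graph_def)
  moreover have "?N \<inter> ?L = {}" unfolding L using sym by (auto simp: nbrs_def compl_graph_def)
  moreover have "finite ?N" "finite ?L" using fin unfolding nbrs_def by auto
  ultimately have "card V = Suc (Suc (card (?N \<union> ?L)))"
    by (metis card_insert_disjoint finite_Un finite_insert)
  moreover have "card (?N \<union> ?L) = card ?N + card ?L"
    by (rule card_Un_disjoint) (use \<open>finite ?N\<close> \<open>finite ?L\<close> \<open>?N \<inter> ?L = {}\<close> in auto)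
  ultimately show ?thesis by simp
qed

lemma hr_alt: "highly_regular V E \<longleftrightarrow> (\<exists>(m::nat) (C::nat \<Rightarrow> nat \<Rightarrow> nat).
      ((2 \<le> m \<and> m < card V) \<or> (m = card V \<and> card V = 2)) \<and> (\<forall>u\<in>V. \<exists>P. goodP V E m C P u))"
  unfolding highly_regular_def goodP_def by (rule refl)

theorem theorem4p1:
  fixes V :: "'a set" and E :: "'a \<Rightarrow> 'a \<Rightarrow> bool"
  assumes "graph V E"
    and "highly_regular V E"
    and "3 \<le> diam V E" and "diam V E < \<infinity>"
  shows "highly_regular V (compl_graph V E) \<and> diam V (compl_graph V E) = 2 \<and>
         \<not> distance_regular V (compl_graph V E)"
proof -
  have fin: "finite V" and sym: "\<And>x y. E x y \<Longrightarrow> E y x" and irr: "\<And>x. \<not> E x x"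
    using assms(1) by (auto simp: graph_def)
  let ?E' = "compl_graph V E"
  have ir': "\<forall>x. \<not> ?E' x x" by (simp add: compl_graph_def)
  obtain m C where mC: "(2 \<le> m \<and> m < card V) \<or> (m = card V \<and> card V = 2)"
    and HP: "\<forall>u\<in>V. \<exists>P. goodP V E m C P u"
    using assms(2) unfolding hr_alt by (elim exE conjE)
  have fin_d: "gdist V E u v < \<infinity>" if "u \<in> V" "v \<in> V" for u v
  proof -
    have "gdist V E u v \<le> diam V E" unfolding diam_def using that
      by (meson SUP_upper2 SUP_upper)
    then show ?thesis using assms(4) by (rule le_less_trans)
  qed
  have conn: "\<exists>xs. walk V E xs \<and> hd xs = u \<and> last xs = v" if "u \<in> V" "v \<in> V" for u v
    using gdist_less[OF fin_d[OF that]] by blast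
  have "\<not> diam V E \<le> 2"
  proof
    assume "diam V E \<le> 2"
    with assms(3) have "(3::enat) \<le> 2" by (rule order.trans)
    then show False by (simp add: numeral_eq_enat)
  qed
  then obtain u0 v0 where u0: "u0 \<in> V" "v0 \<in> V" and far: "\<not> gdist V E u0 v0 \<le> 2"
    unfolding diam_def SUP_le_iff by blast
  obtain w where w: "walk V E w" "hd w = u0" "last w = v0"
    and wmin: "\<And>w'. walk V E w' \<Longrightarrow> hd w' = u0 \<Longrightarrow> last w' = v0 \<Longrightarrow> length w \<le> length w'"
  proof -
    obtain xs where "walk V E xs \<and> hd xs = u0 \<and> last xs = v0" using conn u0 by blast
    from ex_has_least_nat[of "\<lambda>xs. walk V E xs \<and> hd xs = u0 \<and> last xs = v0" xs length, OF this]
    show ?thesis using that by blast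
  qed
  have "gdist V E u0 v0 \<le> enat (length w - 1)" by (rule gdist_le[OF w])
  with far have "\<not> enat (length w - 1) \<le> 2" using order.trans by blast
  hence "\<not> length w - 1 \<le> 2" by (simp add: numeral_eq_enat)
  hence lw: "4 \<le> length w" by arith
  have wV: "w ! t \<in> V" if "t < length w" for t using w(1) that nth_mem[of t w] unfolding walk_def by auto
  have wE: "E (w ! t) (w ! Suc t)" if "Suc t < length w" for t using w(1) that unfolding walk_def by auto
  have wne: "w \<noteq> []" using lw by auto
  define x where "x = w ! 0"
  define a where "a = w ! 1"
  define b where "b = w ! 2"
  define y where "y = w ! 3"
  have V4: "x \<in> V" "a \<in> V" "b \<in> V" "y \<in> V" using wV[of 0] wV[of 1] wV[of 2] wV[of 3] lw wne
    unfolding x_def a_def b_def y_def by auto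
  have xa: "E x a" and ab: "E a b" and "E b y"
    using wE[of 0] wE[of 1] wE[of 2] lw unfolding x_def a_def b_def y_def by (auto simp: numeral_eq_Suc)
  have xu: "x = u0" using w lw unfolding x_def by (metis hd_conv_nth walk_def)
  have short: False if "walk V E w'" "hd w' = x" "last w' = v0" "length w' < length w" for w'
    using wmin[of w'] that xu by auto
  have d2: "walk V E (drop 2 w)" "hd (drop 2 w) = b" "last (drop 2 w) = v0" "length (drop 2 w) < length w"
    using walk_drop[OF w(1), of 2] lw w(3) unfolding b_def by (auto simp: hd_drop_conv_nth)
  have d3: "walk V E (drop 3 w)" "hd (drop 3 w) = y" "last (drop 3 w) = v0" "length (drop 3 w) + 1 < length w"
    using walk_drop[OF w(1), of 3] lw w(3) unfolding y_def by (auto simp: hd_drop_conv_nth)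
  have xb: "x \<noteq> b" using short[OF d2(1) _ d2(3,4)] d2(2) by auto
  have nxb: "\<not> E x b"
  proof
    assume "E x b"
    hence "walk V E (x # drop 2 w)" using walk_ConsI[OF d2(1) V4(1)] d2(2) by simp
    then show False using short[of "x # drop 2 w"] d2 lw by (simp; presburger)
  qed
  have xy: "x \<noteq> y" using short[OF d3(1) _ d3(3)] d3(2,4) by auto
  have nxy: "\<not> E x y"
  proof
    assume "E x y"
    hence "walk V E (x # drop 3 w)" using walk_ConsI[OF d3(1) V4(1)] d3(2) by simp
    then show False using short[of "x # drop 3 w"] d3 lw by (simp; presburger)
  qed
  have nc: "\<not> (E x z \<and> E z y)" if "z \<in> V" for z
  proof
    assume h: "E x z \<and> E z y"
    hence "walk V E (z # drop 3 w)" using walk_ConsI[OF d3(1) that] d3(2) by simp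
    hence "walk V E (x # z # drop 3 w)" using walk_ConsI[OF _ V4(1)] h by simp
    then show False using short[of "x # z # drop 3 w"] d3 lw by (simp; presburger)
  qed
  define k where "k = (\<Sum>i\<in>{1..m}. C i 1)"
  have deg: "card (nbrs V E v) = k" if vV: "v \<in> V" for v
  proof -
    have "\<exists>P. goodP V E m C P v" using HP vV by blast
    then obtain P where P: "goodP V E m C P v" by blast
    have Pv: "P v = 1" using goodP_D(2)[OF P] vV by blast
    have eq: "nbrs V E v = (\<Union>i\<in>{1..m}. {x\<in>V. P x = i \<and> E x v})"
    proof (rule set_eqI)
      fix z show "z \<in> nbrs V E v \<longleftrightarrow> z \<in> (\<Union>i\<in>{1..m}. {x\<in>V. P x = i \<and> E x v})"
        using goodP_D(1)[OF P, of z] sym[of v z] sym[of z v] unfolding nbrs_def by blast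
    qed
    have "card (nbrs V E v) = (\<Sum>i\<in>{1..m}. card {x\<in>V. P x = i \<and> E x v})"
      unfolding eq by (rule card_UN_disjoint) (auto simp: fin)
    also have "\<dots> = k" unfolding k_def
      by (rule sum.cong[OF refl]) (rule goodP_D(4)[OF P _ _ vV Pv], simp_all)
    finally show ?thesis .
  qed
  have fN: "finite (nbrs V E v)" for v using fin unfolding nbrs_def by auto
  have dis: "nbrs V E x \<inter> nbrs V E y = {}" using nc sym unfolding nbrs_def by auto
  have cxy: "card V = 2 + 2 * k + card (nbrs V ?E' y \<inter> dsphere V ?E' x 1)"
    using count_pair[OF assms(1) V4(1) V4(4) xy nxy] card_Un_disjoint[OF fN fN dis] deg V4 by simp
  have "a \<in> nbrs V E x \<inter> nbrs V E b" using xa ab sym V4 unfolding nbrs_def by auto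
  hence "card (nbrs V E x \<inter> nbrs V E b) > 0" using fN by (auto simp: card_gt_0_iff)
  hence "card (nbrs V E x \<union> nbrs V E b) < 2 * k"
    using card_Un_Int[OF fN fN, of x b] deg V4 by simp
  with count_pair[OF assms(1) V4(1) V4(3) xb nxb]
  have cxb: "card V < 2 + 2 * k + card (nbrs V ?E' b \<inter> dsphere V ?E' x 1)" by simp
  have big: "2 * k < card V" using cxy by simp
  have dle: "gdist V ?E' p q \<le> 2" if pq: "p \<in> V" "q \<in> V" for p q
  proof (cases "p = q")
    case True
    have "gdist V ?E' p q \<le> enat (length [p] - 1)"
      by (rule gdist_le) (use walk1[of p V ?E'] pq True in auto)
    then show ?thesis by (rule order.trans) (simp add: numeral_eq_enat)
  next
    case False
    show ?thesis
    proof (cases "E p q")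
      case False
      hence "?E' p q" using pq \<open>p \<noteq> q\<close> by (simp add: compl_graph_def)
      have "gdist V ?E' p q \<le> enat (length [p, q] - 1)"
        by (rule gdist_le) (use walk2[of p V q ?E'] pq \<open>?E' p q\<close> in auto)
      then show ?thesis by (rule order.trans) (simp add: numeral_eq_enat)
    next
      case True
      have "card (nbrs V E p \<union> nbrs V E q) \<le> 2 * k"
        using card_Un_le[of "nbrs V E p" "nbrs V E q"] deg pq by simp
      have "\<not> V \<subseteq> nbrs V E p \<union> nbrs V E q"
      proof
        assume "V \<subseteq> nbrs V E p \<union> nbrs V E q"
        hence "card V \<le> card (nbrs V E p \<union> nbrs V E q)" by (rule card_mono[OF finite_UnI[OF fN fN]])
        with \<open>card (nbrs V E p \<union> nbrs V E q) \<le> 2 * k\<close> big show False by linarith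
      qed
      then obtain z where z: "z \<in> V" "z \<notin> nbrs V E p" "z \<notin> nbrs V E q" by blast
      have "?E' p z" "?E' z q" using z pq True sym irr unfolding nbrs_def compl_graph_def by auto
      have "gdist V ?E' p q \<le> enat (length [p, z, q] - 1)"
        by (rule gdist_le) (use walk3[of p V z q ?E'] pq z \<open>?E' p z\<close> \<open>?E' z q\<close> in auto)
      then show ?thesis by (rule order.trans) (simp add: numeral_eq_enat)
    qed
  qed
  have "gdist V ?E' x a \<ge> 2"
  proof (rule ccontr)
    assume "\<not> gdist V ?E' x a \<ge> 2"
    hence "gdist V ?E' x a < 2" by simp
    hence "x = a \<or> ?E' x a" by (rule gdist_lt2)
    then show False using xa irr by (auto simp: compl_graph_def)
  qed
  moreover have "gdist V ?E' x a \<le> diam V ?E'" unfolding diam_def using V4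
    by (meson SUP_upper2 SUP_upper)
  ultimately have "2 \<le> diam V ?E'" by (rule order.trans)
  moreover have "diam V ?E' \<le> 2" unfolding diam_def SUP_le_iff using dle by blast
  ultimately have diam2: "diam V ?E' = 2" by (rule antisym[rotated])
  have ndr: "\<not> distance_regular V ?E'"
  proof
    assume dr: "distance_regular V ?E'"
    have "?E' x y" "?E' x b" using V4 xy nxy xb nxb by (auto simp: compl_graph_def)
    hence "gdist V ?E' x y = enat 1" "gdist V ?E' x b = enat 1"
      using gdist_one[of ?E' x V y, OF ir' V4(1,4)] gdist_one[of ?E' x V b, OF ir' V4(1,3)] by auto
    with dr V4 have "card (nbrs V ?E' y \<inter> dsphere V ?E' x 1) = card (nbrs V ?E' b \<inter> dsphere V ?E' x 1)"
      unfolding distance_regular_def by blast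
    with cxy cxb show False by simp
  qed
  have "\<exists>P. goodP V E m C P x" using HP V4(1) by blast
  then obtain P0 where P0: "goodP V E m C P0 x" by blast
  define C' where "C' i j = card {z\<in>V. P0 z = i} - (if i = j then 1 else 0) - C i j" for i j
  have "goodP V ?E' m C' P u" if u: "u \<in> V" and P: "goodP V E m C P u" for u P
  proof -
    have cs: "card {z\<in>V. P z = i} = card {z\<in>V. P0 z = i}" if "i \<in> {1..m}" for i
      using cell_size[OF assms(1) P P0 _ that] conn u by blast
    have "card {z\<in>V. P z = i \<and> ?E' z y} = C' i j"
      if ij: "i \<in> {1..m}" "j \<in> {1..m}" and yV: "y \<in> V" and Py: "P y = j" for i j y
    proof -
      let ?A = "{z\<in>V. P z = i}"
      let ?B = "{z\<in>V. P z = i \<and> E z y} \<union> (if i = j then {y} else {})"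
      have eqs: "{z\<in>V. P z = i \<and> ?E' z y} = ?A - ?B" using yV Py by (auto simp: compl_graph_def)
      have sub: "?B \<subseteq> ?A" using yV Py by auto
      have cB: "card ?B = C i j + (if i = j then 1 else 0)"
      proof -
        have "card {z\<in>V. P z = i \<and> E z y} = C i j" using P ij yV Py unfolding goodP_def by auto
        moreover have "finite {z\<in>V. P z = i \<and> E z y}" using fin by auto
        moreover have "y \<notin> {z\<in>V. P z = i \<and> E z y}" using irr by auto
        ultimately show ?thesis by auto
      qed
      have "card (?A - ?B) = card ?A - card ?B" using sub fin by (intro card_Diff_subset) (auto intro: finite_subset)
      then show ?thesis unfolding eqs C'_def using cB cs[OF ij(1)] by simp
    qed
    then show ?thesis using P unfolding goodP_def by auto
  qed
  hence "\<forall>u\<in>V. \<exists>P. goodP V ?E' m C' P u" using HP by blast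
  hence "highly_regular V ?E'" using mC unfolding hr_alt by blast
  with diam2 ndr show ?thesis by blast
qed

end
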